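(* For every maximal consistent set $X$ (relative to the axiom system of $\mathbb{PCL}$), the relation $\le_X$ on formulas, defined by $A\le_X B$ iff $(A\lor B)>A\in X$, is reflexive and transitive.
   Context: Formulas $\mathcal{L}::=p\mid\bot\mid A\wedge B\mid A\lor B\mid A\to B\mid A>B$. The axiom system of $\mathbb{PCL}$: classical propositional logic, rules (RCEA) from $A\leftrightarrow B$ infer $(A>C)\leftrightarrow(B>C)$, (RCK) from $A\to B$ infer $(C>A)\to(C>B)$, axioms (ID) $A>A$, (R-And) $(A>B)\wedge(A>C)\to(A>(B\wedge C))$, (CM) $(A>B)\wedge(A>C)\to((A\wedge B)>C)$, (OR) $(A>C)\wedge(B>C)\to((A\lor B)>C)$. Maximal consistent sets are the usual ones relative to this axiom system. *)

theory Defs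
  imports Main
begin

datatype 'p fm =
    Atom 'p
  | Bot
  | Conj "'p fm" "'p fm"
  | Disj "'p fm" "'p fm"
  | Imp "'p fm" "'p fm"
  | Cond "'p fm" "'p fm"

definition Neg :: "'p fm \<Rightarrow> 'p fm" where
  "Neg A = Imp A Bot"

definition Iff :: "'p fm \<Rightarrow> 'p fm \<Rightarrow> 'p fm" where
  "Iff A B = Conj (Imp A B) (Imp B A)"

text \<open>Classical propositional evaluation: atoms and conditionals A > B are treated as
  propositional atoms, valued by v.\<close>
fun peval :: "('p fm \<Rightarrow> bool) \<Rightarrow> 'p fm \<Rightarrow> bool" where
  "peval v (Atom p) = v (Atom p)"
| "peval v Bot = False"
| "peval v (Conj A B) = (peval v A \<and> peval v B)"
| "peval v (Disj A B) = (peval v A \<or> peval v B)"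
| "peval v (Imp A B) = (peval v A \<longrightarrow> peval v B)"
| "peval v (Cond A B) = v (Cond A B)"

definition taut :: "'p fm \<Rightarrow> bool" where
  "taut A = (\<forall>v. peval v A)"

inductive pcl :: "'p fm \<Rightarrow> bool" where
  Taut: "taut A \<Longrightarrow> pcl A"
| MP: "pcl (Imp A B) \<Longrightarrow> pcl A \<Longrightarrow> pcl B"
| RCEA: "pcl (Iff A B) \<Longrightarrow> pcl (Iff (Cond A C) (Cond B C))"
| RCK: "pcl (Imp A B) \<Longrightarrow> pcl (Imp (Cond C A) (Cond C B))"
| ID: "pcl (Cond A A)"
| RAnd: "pcl (Imp (Conj (Cond A B) (Cond A C)) (Cond A (Conj B C)))"
| CM: "pcl (Imp (Conj (Cond A B) (Cond A C)) (Cond (Conj A B) C))"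
| OR: "pcl (Imp (Conj (Cond A C) (Cond B C)) (Cond (Disj A B) C))"

definition derives :: "'p fm set \<Rightarrow> 'p fm \<Rightarrow> bool" where
  "derives X A = (\<exists>Gs. set Gs \<subseteq> X \<and> pcl (foldr Imp Gs A))"

definition consistent :: "'p fm set \<Rightarrow> bool" where
  "consistent X = (\<not> derives X Bot)"

definition max_consistent :: "'p fm set \<Rightarrow> bool" where
  "max_consistent X = (consistent X \<and> (\<forall>A. A \<notin> X \<longrightarrow> \<not> consistent (insert A X)))"

definition leX :: "'p fm set \<Rightarrow> 'p fm \<Rightarrow> 'p fm \<Rightarrow> bool" where
  "leX X A B = (Cond (Disj A B) A \<in> X)"

end

theory Submission
  imports Defs
begin

lemma peval_foldr: "peval v (foldr Imp Gs B) = ((\<forall>g\<in>set Gs. peval v g) \<longrightarrow> peval v B)"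
  by (induction Gs) auto

lemma pcl_sem_imp: "(\<And>v. peval v A \<Longrightarrow> peval v B) \<Longrightarrow> pcl (Imp A B)"
  by (rule pcl.Taut) (simp add: taut_def)

lemma pcl_mono: "pcl A \<Longrightarrow> (\<And>v. peval v A \<Longrightarrow> peval v B) \<Longrightarrow> pcl B"
  using pcl.MP pcl_sem_imp by blast

lemma pcl_conj: "pcl A \<Longrightarrow> pcl B \<Longrightarrow> pcl (Conj A B)"
proof -
  assume a: "pcl A" and b: "pcl B"
  have "pcl (Imp A (Imp B (Conj A B)))" by (rule pcl.Taut) (simp add: taut_def)
  then show ?thesis using a b pcl.MP by blast
qed

lemma mcs_derives:
  assumes m: "max_consistent X" and gs: "set Gs \<subseteq> X" and p: "pcl (foldr Imp Gs A)"
  shows "A \<in> X"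
proof (rule ccontr)
  assume n: "A \<notin> X"
  then have "\<not> consistent (insert A X)" using m unfolding max_consistent_def by blast
  then obtain Hs where hs: "set Hs \<subseteq> insert A X" "pcl (foldr Imp Hs Bot)"
    unfolding consistent_def derives_def by blast
  define Ks where "Ks = filter (\<lambda>g. g \<noteq> A) Hs"
  have ks: "set Ks \<subseteq> X" using hs(1) unfolding Ks_def by auto
  have "pcl (Conj (foldr Imp Hs Bot) (foldr Imp Gs A))" using hs(2) p pcl_conj by blast
  then have "pcl (foldr Imp (Ks @ Gs) Bot)"
    by (rule pcl_mono) (auto simp: peval_foldr Ks_def)
  moreover have "set (Ks @ Gs) \<subseteq> X" using ks gs by auto
  ultimately have "derives X Bot" unfolding derives_def by blast
  then show False using m unfolding max_consistent_def consistent_def by blast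
qed

lemma thm_X: "max_consistent X \<Longrightarrow> pcl A \<Longrightarrow> A \<in> X"
  using mcs_derives[of X "[]" A] by simp

lemma mp_X: "max_consistent X \<Longrightarrow> Imp A B \<in> X \<Longrightarrow> A \<in> X \<Longrightarrow> B \<in> X"
  using mcs_derives[of X "[Imp A B, A]" B] pcl.Taut[of "Imp (Imp A B) (Imp A B)"]
  by (simp add: taut_def)

lemma conj_X: "max_consistent X \<Longrightarrow> A \<in> X \<Longrightarrow> B \<in> X \<Longrightarrow> Conj A B \<in> X"
  using mcs_derives[of X "[A, B]" "Conj A B"] pcl.Taut[of "Imp A (Imp B (Conj A B))"]
  by (simp add: taut_def)

lemma rck_X:
  assumes m: "max_consistent X" and s: "\<And>v. peval v A \<Longrightarrow> peval v B" and c: "Cond C A \<in> X"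
  shows "Cond C B \<in> X"
proof -
  have "pcl (Imp (Cond C A) (Cond C B))" using pcl.RCK pcl_sem_imp s by blast
  then show ?thesis using m c thm_X mp_X by blast
qed

lemma rcea_X:
  assumes m: "max_consistent X" and s: "\<And>v. peval v A = peval v B" and c: "Cond A C \<in> X"
  shows "Cond B C \<in> X"
proof -
  have "pcl (Iff A B)" by (rule pcl.Taut) (simp add: taut_def Iff_def s)
  then have "pcl (Iff (Cond A C) (Cond B C))" by (rule pcl.RCEA)
  then have "pcl (Imp (Cond A C) (Cond B C))"
    by (rule pcl_mono) (simp add: Iff_def)
  then show ?thesis using m c thm_X mp_X by blast
qed

lemma id_X: "max_consistent X \<Longrightarrow> Cond A A \<in> X"
  using thm_X pcl.ID by blast

lemma or_X: "max_consistent X \<Longrightarrow> Cond A C \<in> X \<Longrightarrow> Cond B C \<in> X \<Longrightarrow> Cond (Disj A B) C \<in> X"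
  using thm_X mp_X conj_X pcl.OR by metis

lemma and_X: "max_consistent X \<Longrightarrow> Cond A B \<in> X \<Longrightarrow> Cond A C \<in> X \<Longrightarrow> Cond A (Conj B C) \<in> X"
  using thm_X mp_X conj_X pcl.RAnd by metis

lemma cm_X: "max_consistent X \<Longrightarrow> Cond A B \<in> X \<Longrightarrow> Cond A C \<in> X \<Longrightarrow> Cond (Conj A B) C \<in> X"
  using thm_X mp_X conj_X pcl.CM by metis

lemma cut_X:
  assumes m: "max_consistent X" and ab: "Cond A B \<in> X" and abc: "Cond (Conj A B) C \<in> X"
  shows "Cond A C \<in> X"
proof -
  have 1: "Cond (Conj A B) (Disj (Neg B) C) \<in> X"
    using rck_X[OF m _ abc] by simp
  have 2: "Cond (Conj A (Neg B)) (Disj (Neg B) C) \<in> X"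
    using rck_X[OF m _ id_X[OF m, of "Conj A (Neg B)"]] by simp
  have 3: "Cond (Disj (Conj A B) (Conj A (Neg B))) (Disj (Neg B) C) \<in> X"
    using or_X[OF m 1 2] .
  have 4: "Cond A (Disj (Neg B) C) \<in> X"
    using rcea_X[OF m _ 3] by (auto simp: Neg_def)
  have 5: "Cond A (Conj B (Disj (Neg B) C)) \<in> X" using and_X[OF m ab 4] .
  show ?thesis using rck_X[OF m _ 5] by (auto simp: Neg_def)
qed

theorem mainTheorem5:
  fixes X :: "'p fm set"
  assumes "max_consistent X"
  shows "(\<forall>A. leX X A A) \<and> (\<forall>A B C. leX X A B \<longrightarrow> leX X B C \<longrightarrow> leX X A C)"
proof (intro conjI allI impI)
  note m = assms
  fix A :: "'p fm"
  show "leX X A A" unfolding leX_def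
    using rcea_X[OF m _ id_X[OF m, of A], of "Disj A A"] by simp
next
  note m = assms
  fix A B C :: "'p fm"
  assume p1: "leX X A B" and p2: "leX X B C"
  let ?D = "Disj (Disj A B) (Disj B C)"
  have P1: "Cond (Disj A B) A \<in> X" using p1 unfolding leX_def .
  have P2: "Cond (Disj B C) B \<in> X" using p2 unfolding leX_def .
  have a: "Cond (Disj B C) (Disj A B) \<in> X" using rck_X[OF m _ P2] by simp
  have b: "Cond ?D (Disj A B) \<in> X" using or_X[OF m id_X[OF m] a] .
  have c: "Cond (Conj ?D (Disj A B)) A \<in> X" using rcea_X[OF m _ P1, of "Conj ?D (Disj A B)"] by auto
  have d: "Cond ?D A \<in> X" using cut_X[OF m b c] .
  have e: "Cond ?D (Disj A C) \<in> X" using rck_X[OF m _ d] by simp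
  have f: "Cond (Conj ?D (Disj A C)) A \<in> X" using cm_X[OF m e d] .
  have "Cond (Disj A C) A \<in> X" using rcea_X[OF m _ f, of "Disj A C"] by auto
  then show "leX X A C" unfolding leX_def .
qed

end
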